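(* Let $\mathbb{F},\widetilde{\mathbb{F}}$ be fields with $\operatorname{char}(\mathbb{F})\notin\{2,3,5\}$ and $\operatorname{char}(\widetilde{\mathbb{F}})\neq 2$, and let $f:\mathbb{F}\to\widetilde{\mathbb{F}}$ be an SD-map. Then $\operatorname{char}(\mathbb{F})=\operatorname{char}(\widetilde{\mathbb{F}})$, and moreover $f$ fixes the common prime subfield (i.e.\ $f$ restricted to the prime subfield of $\mathbb{F}$ is the canonical identification with the prime subfield of $\widetilde{\mathbb{F}}$).
   Context: A map $f:\mathbb{F}\to\widetilde{\mathbb{F}}$ between fields is called an SD-map if for all $x\neq y$ in $\mathbb{F}$ one has $f(x)\neq f(y)$ and \[ f\left(\frac{x+y}{x-y}\right)=\frac{f(x)+f(y)}{f(x)-f(y)}. \] *)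

theory Defs
  imports Main
begin

definition SD_map :: "('a::field \<Rightarrow> 'b::field) \<Rightarrow> bool" where
  "SD_map f \<longleftrightarrow> (\<forall>x y. x \<noteq> y \<longrightarrow>
      f x \<noteq> f y \<and> f ((x + y) / (x - y)) = (f x + f y) / (f x - f y))"

end

theory Submission
  imports Defs
begin

lemma dvd3: "(c::nat) dvd 3 \<Longrightarrow> c = 1 \<or> c = 3"
proof -
  assume h: "c dvd 3"
  then have "c \<le> 3" by (simp add: dvd_imp_le)
  then have "c = 0 \<or> c = 1 \<or> c = 2 \<or> c = 3" by arith
  then show ?thesis using h by auto
qed

lemma dvd5: "(c::nat) dvd 5 \<Longrightarrow> c = 1 \<or> c = 5"
proof -
  assume h: "c dvd 5"
  then have "c \<le> 5" by (simp add: dvd_imp_le)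
  then have "c = 0 \<or> c = 1 \<or> c = 2 \<or> c = 3 \<or> c = 4 \<or> c = 5" by arith
  then show ?thesis using h by auto
qed

lemma dvd2: "(c::nat) dvd 2 \<Longrightarrow> c = 1 \<or> c = 2"
proof -
  assume h: "c dvd 2"
  then have "c \<le> 2" by (simp add: dvd_imp_le)
  then have "c = 0 \<or> c = 1 \<or> c = 2" by arith
  then show ?thesis using h by auto
qed

lemma two_ne: "CHAR('a::field) \<noteq> 2 \<Longrightarrow> (2::'a) \<noteq> 0"
proof
  assume "CHAR('a) \<noteq> 2" "(2::'a) = 0"
  then have "of_nat 2 = (0::'a)" by simp
  then have "CHAR('a) dvd 2" by (simp only: of_nat_eq_0_iff_char_dvd)
  then show False using dvd2 \<open>CHAR('a) \<noteq> 2\<close> by fastforce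
qed

lemma three_ne: "CHAR('a::field) \<noteq> 3 \<Longrightarrow> (3::'a) \<noteq> 0"
proof
  assume "CHAR('a) \<noteq> 3" "(3::'a) = 0"
  then have "of_nat 3 = (0::'a)" by simp
  then have "CHAR('a) dvd 3" by (simp only: of_nat_eq_0_iff_char_dvd)
  then show False using dvd3 \<open>CHAR('a) \<noteq> 3\<close> by fastforce
qed

lemma five_ne: "CHAR('a::field) \<noteq> 5 \<Longrightarrow> (5::'a) \<noteq> 0"
proof
  assume "CHAR('a) \<noteq> 5" "(5::'a) = 0"
  then have "of_nat 5 = (0::'a)" by simp
  then have "CHAR('a) dvd 5" by (simp only: of_nat_eq_0_iff_char_dvd)
  then show False using dvd5 \<open>CHAR('a) \<noteq> 5\<close> by fastforce
qed

lemma poly_step: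
  fixes t s q p h :: "'b::field"
  assumes E1: "s * (t - 1) = t + 1" and Eq: "q = t * t" and Eh: "h = t * s"
   and E2': "q * (p - s) = p + s" and E3': "p * (h - q) = h + q"
  shows "2 * (t * t * (t + 1) * ((t + 1) - (t - 1) * (t * t - t + 1))) = 0"
proof -
  have E2: "p * (q - 1) = s * (q + 1)" using E2' by (simp add: algebra_simps)
  have E3: "h * (p - 1) = q * (p + 1)" using E3' by (simp add: algebra_simps)
  have "h*(p-1)*(q-1) = q*(p+1)*(q-1)" using E3 by simp
  then have "t * s * (p*(q-1) - (q-1)) = q * (p*(q-1) + (q-1))"
    unfolding Eh by (simp add: algebra_simps)
  then have F: "t * s * (s*(q+1) - (q - 1)) = q * (s*(q+1) + (q - 1))" by (simp only: E2)
  have "(t-1)*(t-1)*(t * s * (s*(q+1) - (q - 1))) = t * (s*(t-1)) * ((s*(t-1))*(q+1) - (q - 1)*(t-1))"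
    by (simp add: algebra_simps)
  also have "... = t * (t+1) * ((t+1)*(q+1) - (q-1)*(t-1))" using E1 by simp
  finally have L: "(t-1)*(t-1)*(t * s * (s*(q+1) - (q - 1))) = t * (t+1) * ((t+1)*(q+1) - (q-1)*(t-1))" .
  have "(t-1)*(t-1)*(q * (s*(q+1) + (q - 1))) = q * (t-1) * ((s*(t-1))*(q+1) + (q-1)*(t-1))"
    by (simp add: algebra_simps)
  also have "... = q * (t-1) * ((t+1)*(q+1) + (q-1)*(t-1))" using E1 by simp
  finally have R: "(t-1)*(t-1)*(q * (s*(q+1) + (q - 1))) = q * (t-1) * ((t+1)*(q+1) + (q-1)*(t-1))" .
  have "t * (t+1) * ((t+1)*(q+1) - (q-1)*(t-1)) = q * (t-1) * ((t+1)*(q+1) + (q-1)*(t-1))"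
    using L R F by simp
  then show ?thesis unfolding Eq by (simp add: algebra_simps)
qed

lemma cancel_helper: "x = y + d \<Longrightarrow> x = y \<Longrightarrow> d = (0::'a::ab_group_add)"
  by simp

theorem theorem2p4:
  fixes f :: "'a::field \<Rightarrow> 'b::field"
  assumes "CHAR('a) \<notin> {2, 3, 5}"
    and "CHAR('b) \<noteq> 2"
    and "SD_map f"
  shows "CHAR('a) = CHAR('b) \<and>
    (\<forall>m n :: int. of_int n \<noteq> (0::'a) \<longrightarrow>
       f (of_int m / of_int n) = (of_int m / of_int n :: 'b))"
proof -
  have a2: "(2::'a) \<noteq> 0" using assms(1) two_ne by auto
  have a3: "(3::'a) \<noteq> 0" using assms(1) three_ne by auto
  have a5: "(5::'a) \<noteq> 0" using assms(1) five_ne by auto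
  have b2: "(2::'b) \<noteq> 0" using assms(2) two_ne by auto
  have inj: "\<And>x y. x \<noteq> y \<Longrightarrow> f x \<noteq> f y" using assms(3) unfolding SD_map_def by blast
  have sd: "\<And>x y. x \<noteq> y \<Longrightarrow> f ((x + y) / (x - y)) * (f x - f y) = f x + f y"
  proof -
    fix x y :: 'a assume "x \<noteq> y"
    then have "f x \<noteq> f y" "f ((x + y) / (x - y)) = (f x + f y) / (f x - f y)"
      using assms(3) unfolding SD_map_def by blast+
    then show "f ((x + y) / (x - y)) * (f x - f y) = f x + f y" by simp
  qed
  have m1: "(-1::'a) \<noteq> 1" using a2 by (metis add_eq_0_iff equation_minus_iff one_add_one)
  define a where "a = f 0"
  define b where "b = f 1"
  have e0: "\<And>x. x \<noteq> 0 \<Longrightarrow> b * (f x - a) = f x + a"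
  proof -
    fix x :: 'a assume "x \<noteq> 0"
    from sd[OF this] have "f ((x + 0) / (x - 0)) * (f x - f 0) = f x + f 0" .
    then show "b * (f x - a) = f x + a" using \<open>x \<noteq> 0\<close> by (simp add: a_def b_def)
  qed
  have "b * (b - a) = b + a" using e0[of 1] by (simp add: b_def)
  moreover have "b * (f (-1) - a) = f (-1) + a" using e0[of "-1"] by simp
  ultimately have "(b - 1) * (b - f (-1)) = 0" by (simp add: algebra_simps)
  moreover have "b \<noteq> f (-1)" using inj[OF m1] b_def by simp
  ultimately have f1: "f 1 = 1" using b_def by simp
  then have "2 * a = 0" using e0[of 1] b_def by (simp add: algebra_simps)
  then have f0: "f 0 = 0" using b2 a_def by simp
  have fm1: "f (-1) = -1"
  proof -
    from sd[of 0 1] have "f ((0 + 1) / (0 - 1)) * (f 0 - f 1) = f 0 + f 1" by simp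
    then have "- f (-1) = 1" using f0 f1 by simp
    then show ?thesis by (metis minus_minus)
  qed
  have mult: "\<And>r y. f (r * y) = f r * f y"
  proof -
    fix r y :: 'a
    show "f (r * y) = f r * f y"
    proof (cases "r = 1 \<or> y = 0")
      case True then show ?thesis using f0 f1 by auto
    next
      case False
      then have r1: "r \<noteq> 1" and y0: "y \<noteq> 0" by auto
      have ne: "r * y \<noteq> y" using r1 y0 by simp
      have q: "(r * y + y) / (r * y - y) = (r + 1) / (r - 1)"
        using y0 r1 by (simp add: field_simps)
      have A: "f ((r + 1) / (r - 1)) * (f (r*y) - f y) = f (r*y) + f y"
        using sd[OF ne] q by simp
      have B: "f ((r + 1) / (r - 1)) * (f r - 1) = f r + 1"
        using sd[OF r1] f1 by simp
      have fr1: "f r - 1 \<noteq> 0" using inj[OF r1] f1 by simp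
      have d: "f (r*y) - f y \<noteq> 0" using inj[OF ne] by simp
      define c where "c = f ((r + 1) / (r - 1))"
      have "c = (f r + 1) / (f r - 1)" using B fr1 c_def by (simp add: field_simps)
      then have "(f r + 1) * (f (r*y) - f y) = (f (r*y) + f y) * (f r - 1)"
        using A fr1 c_def by (simp add: field_simps)
      then have "2 * f (r*y) = 2 * (f r * f y)" by (simp add: algebra_simps)
      then show ?thesis using b2 by simp
    qed
  qed
  have odd: "\<And>z. f (-z) = - f z" using mult[of "-1"] fm1 by simp
  have inv: "\<And>z. f (1 / z) = 1 / f z"
  proof -
    fix z :: 'a
    show "f (1 / z) = 1 / f z"
    proof (cases "z = 0")
      case True then show ?thesis using f0 by simp
    next
      case False
      then have "f (1/z) * f z = 1" using mult[of "1/z" z] f1 by simp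
      moreover have "f z \<noteq> 0" using inj[OF False] f0 by simp
      ultimately show ?thesis by (simp add: field_simps)
    qed
  qed
  define t where "t = f 2"
  have t0: "t \<noteq> 0" using inj[OF a2] f0 t_def by simp
  have n2_1: "(2::'a) \<noteq> 1"
  proof
    assume h: "(2::'a) = 1"
    have "(2::'a) = 1 + 1" by simp
    from cancel_helper[OF this h] show False by simp
  qed
  have t1: "t \<noteq> 1" using inj[OF n2_1] f1 t_def by simp
  have n21: "(2::'a) \<noteq> -1"
  proof
    assume h: "(2::'a) = -1"
    have "(3::'a) = 2 + 1" by simp
    also have "... = 0" using h by simp
    finally show False using a3 by simp
  qed
  have tm1: "t \<noteq> -1" using inj[OF n21] fm1 t_def by simp
  define s where "s = f 3"
  define q where "q = f 4"
  define p where "p = f 5"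
  define h where "h = f 6"
  have E1: "s * (t - 1) = t + 1" using sd[of 2 1] f1 n2_1 unfolding s_def t_def by simp
  have Eq: "q = t * t" using mult[of 2 2] unfolding q_def t_def by simp
  have Eh: "h = t * s" using mult[of 2 3] unfolding h_def s_def t_def by simp
  have n53: "(5::'a) \<noteq> 3"
  proof
    assume h: "(5::'a) = 3"
    have "(5::'a) = 3 + 2" by simp
    from cancel_helper[OF this h] a2 show False by simp
  qed
  have n64: "(6::'a) \<noteq> 4"
  proof
    assume h: "(6::'a) = 4"
    have "(6::'a) = 4 + 2" by simp
    from cancel_helper[OF this h] a2 show False by simp
  qed
  have d8: "(5 + 3) / (5 - 3) = (4::'a)"
  proof -
    have "(5 + 3::'a) = 4 * 2" "(5 - 3::'a) = 2" by simp_all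
    then show ?thesis using a2 by simp
  qed
  have d10: "(6 + 4) / (6 - 4) = (5::'a)"
  proof -
    have "(6 + 4::'a) = 5 * 2" "(6 - 4::'a) = 2" by simp_all
    then show ?thesis using a2 by simp
  qed
  have E2': "q * (p - s) = p + s" using sd[OF n53] unfolding q_def p_def s_def d8 .
  have E3': "p * (h - q) = h + q" using sd[OF n64] unfolding q_def p_def h_def d10 .
  have "2 * (t * t * (t + 1) * ((t + 1) - (t - 1) * (t * t - t + 1))) = 0"
    using poly_step[OF E1 Eq Eh E2' E3'] .
  then have "(t + 1) - (t - 1) * (t * t - t + 1) = 0" using b2 t0 tm1 by (auto simp: add_eq_0_iff equation_minus_iff)
  then have "(t - 2) * (t * t + 1) = 0" by (simp add: algebra_simps)
  moreover have "t * t + 1 \<noteq> 0"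
  proof
    assume "t * t + 1 = 0"
    then have "t * t = -1" by (simp add: eq_neg_iff_add_eq_0)
    then have "f 4 = f (-1)" using Eq q_def fm1 by simp
    moreover have "(4::'a) \<noteq> -1"
    proof
      assume h: "(4::'a) = -1"
      have "(5::'a) = 4 + 1" by simp
      also have "... = 0" using h by simp
      finally show False using a5 by simp
    qed
    ultimately show False using inj by blast
  qed
  ultimately have f2: "f 2 = 2" using t_def by simp
  have step: "f (of_nat (k + 2)) = of_nat (k + 2)"
    if h0: "f (of_nat k) = of_nat k" and h1: "f (of_nat (k + 1)) = of_nat (k + 1)" for k
  proof (cases "(of_nat (k + 1) :: 'a) = 1")
    case True
    then have k0: "(of_nat k :: 'a) = 0" by simp
    then have "(of_nat k :: 'b) = 0" using h0 f0 by simp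
    moreover have "(of_nat (k + 2) :: 'a) = 2" using k0 by simp
    ultimately show ?thesis using f2 by simp
  next
    case False
    have ne: "(of_nat (k + 2) :: 'a) \<noteq> of_nat k" using a2 by simp
    have q: "((of_nat (k + 2) :: 'a) + of_nat k) / (of_nat (k + 2) - of_nat k) = of_nat (k + 1)"
      using a2 by (simp add: field_simps)
    define F where "F = f (of_nat (k + 2))"
    have E0: "f (of_nat (k + 1)) * (F - f (of_nat k)) = F + f (of_nat k)"
      using sd[OF ne] unfolding q F_def .
    have E: "(of_nat (k + 1) :: 'b) * (F - of_nat k) = F + of_nat k"
      using E0 unfolding h0 h1 .
    have "f (of_nat (k + 1)) \<noteq> f 1" using inj[OF False] .
    then have kb: "(of_nat k :: 'b) \<noteq> 0" using h1 f1 by simp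
    from E have "of_nat k * F = (of_nat k :: 'b) * (of_nat k + 2)" by (simp add: algebra_simps)
    then have "F = of_nat k + 2" using kb by simp
    then show ?thesis unfolding F_def by simp
  qed
  have fnat2: "f (of_nat n) = of_nat n \<and> f (of_nat (Suc n)) = of_nat (Suc n)" for n
  proof (induction n)
    case 0 then show ?case using f0 f1 by simp
  next
    case (Suc n)
    then show ?case using step[of n] by simp
  qed
  have fnat: "f (of_nat n) = of_nat n" for n using fnat2 by blast
  have iff: "(of_nat n = (0::'a)) \<longleftrightarrow> (of_nat n = (0::'b))" for n
  proof
    assume "of_nat n = (0::'a)" then show "of_nat n = (0::'b)" using fnat[of n] f0 by simp
  next
    assume h: "of_nat n = (0::'b)"
    show "of_nat n = (0::'a)"
    proof (rule ccontr)
      assume "of_nat n \<noteq> (0::'a)"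
      then have "f (of_nat n) \<noteq> f 0" using inj by blast
      then show False using h fnat[of n] f0 by simp
    qed
  qed
  have dv: "CHAR('a) dvd n \<longleftrightarrow> CHAR('b) dvd n" for n
    using iff[of n] by (simp add: of_nat_eq_0_iff_char_dvd)
  have ch: "CHAR('a) = CHAR('b)"
    using dv[of "CHAR('a)"] dv[of "CHAR('b)"] by (simp add: dvd_antisym)
  have fint: "f (of_int m) = of_int m" for m :: int
  proof (cases "m \<ge> 0")
    case True
    then obtain k where "m = int k" by (rule nonneg_eq_int)
    then show ?thesis using fnat[of k] by simp
  next
    case False
    then have "0 \<le> - m" by simp
    then obtain k where "- m = int k" by (rule nonneg_eq_int)
    then have "m = - int k" by simp
    then show ?thesis using fnat[of k] odd[of "of_nat k"] by simp
  qed
  have "f (of_int m / of_int n) = (of_int m / of_int n :: 'b)" for m n :: int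
  proof -
    have "f (of_int m / of_int n) = f (of_int m * (1 / of_int n))" by simp
    also have "... = f (of_int m) * f (1 / of_int n)" by (rule mult)
    also have "... = of_int m * (1 / of_int n)" by (simp only: fint inv)
    finally show ?thesis by simp
  qed
  then show ?thesis using ch by blast
qed

end
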